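(* For every real $s\ge 2$, \[ \int_{-\infty}^{\infty}\left|\frac{\sin(\pi x)}{\pi x}\right|^{s}dx\;\le\;\frac{1}{\sqrt{s}}\sqrt{\left(1+\frac{1}{s-1}\right)^{s-1}}\;<\;\sqrt{\frac{e}{s}}. \] *)

theory Defs
  imports "HOL-Analysis.Analysis"
begin

definition nsinc :: "real \<Rightarrow> real" where
  "nsinc x = (if x = 0 then 1 else sin (pi * x) / (pi * x))"

end

theory Submission
  imports Defs "HOL-Probability.Probability"
begin


lemma k_nonneg: assumes "0 \<le> t" "t \<le> pi" shows "t * cos t \<le> sin t"
proof -
  have "(\<lambda>x. sin x - x * cos x) 0 \<le> (\<lambda>x. sin x - x * cos x) t"
  proof (rule DERIV_nonneg_imp_nondecreasing[OF assms(1)])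
    fix x assume x: "0 \<le> x" "x \<le> t"
    show "\<exists>y. DERIV (\<lambda>x. sin x - x * cos x) x :> y \<and> 0 \<le> y"
      apply (rule exI[of _ "x * sin x"])
      using x assms by (auto intro!: derivative_eq_intros mult_nonneg_nonneg sin_ge_zero)
  qed
  thus ?thesis by simp
qed

lemma g_nonneg: assumes "0 \<le> t" "t \<le> pi" shows "t * cos t \<le> sin t - t^2 * sin t / 3"
proof -
  have "(\<lambda>x. sin x - x^2 * sin x / 3 - x * cos x) 0 \<le> (\<lambda>x. sin x - x^2 * sin x / 3 - x * cos x) t"
  proof (rule DERIV_nonneg_imp_nondecreasing[OF assms(1)])
    fix x assume x: "0 \<le> x" "x \<le> t"
    have "0 \<le> x / 3 * (sin x - x * cos x)" using k_nonneg[of x] x assms by simp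
    then show "\<exists>y. DERIV (\<lambda>x. sin x - x^2 * sin x / 3 - x * cos x) x :> y \<and> 0 \<le> y"
      apply (intro exI[of _ "x / 3 * (sin x - x * cos x)"] conjI)
      by (auto intro!: derivative_eq_intros simp: algebra_simps power2_eq_square)
  qed
  thus ?thesis by simp
qed

lemma sin_gauss: assumes "0 \<le> t" "t \<le> pi" shows "sin t \<le> t * exp (-(t^2) / 6)"
proof (cases "t = 0")
  case True thus ?thesis by simp
next
  case False
  hence t: "0 < t" using assms by simp
  define h where "h = (\<lambda>x. sinc x * exp (x^2 / 6))"
  have cont: "continuous_on {0..t} h" unfolding h_def
    by (intro continuous_intros continuous_at_imp_continuous_on ballI isCont_sinc) auto
  have der: "DERIV h x :> exp (x^2/6) * ((x * cos x - sin x + x^2 * sin x / 3) / x^2)"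
    if x: "0 < x" for x
  proof -
    have d1: "DERIV (\<lambda>y. sin y / y) x :> (cos x * x - 1 * sin x) / (x ^ Suc (Suc 0))"
      by (rule DERIV_quotient[OF DERIV_sin DERIV_ident]) (use x in simp)
    have d2: "DERIV (\<lambda>y. exp (y^2 / 6)) x :> exp (x^2/6) * (x / 3)"
      by (auto intro!: derivative_eq_intros)
    have "DERIV (\<lambda>x. sin x / x * exp (x^2 / 6)) x :> exp (x^2/6) * ((x * cos x - sin x + x^2 * sin x / 3) / x^2)"
      apply (rule DERIV_cong[OF DERIV_mult[OF d1 d2]])
      using x by (simp add: field_simps power2_eq_square)
    then show ?thesis unfolding h_def
      apply (rule has_field_derivative_transform_within_open[where S="{0<..}"])
      using x by auto
  qed
  obtain l z where z: "0 < z" "z < t" "DERIV h z :> l" "h t - h 0 = (t - 0) * l"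
  proof -
    have "h differentiable (at x)" if "0 < x" "x < t" for x
      using der[OF that(1)] real_differentiable_def by blast
    from MVT[OF t cont this] show ?thesis using that by blast
  qed
  have "l = exp (z^2/6) * ((z * cos z - sin z + z^2 * sin z / 3) / z^2)"
    using DERIV_unique[OF z(3) der[OF z(1)]] .
  moreover have "z * cos z - sin z + z^2 * sin z / 3 \<le> 0" using g_nonneg[of z] z assms by simp
  ultimately have "l \<le> 0"
    using mult_nonneg_nonpos[OF less_imp_le[OF exp_gt_zero[of "z^2/6"]]] z(1)
    by (simp add: divide_nonpos_pos)
  hence "t * l \<le> 0" using t by (simp add: mult_nonneg_nonpos)
  moreover have "h 0 = 1" by (simp add: h_def)
  ultimately have "h t \<le> 1" using z(4) by simp
  hence "sin t / t * exp (t^2/6) \<le> 1" using t by (simp add: h_def)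
  hence "sin t / t \<le> exp (-(t^2)/6)" by (simp add: exp_minus field_simps)
  thus ?thesis using t by (simp add: field_simps)
qed



lemma tailR:
  fixes s :: real assumes s: "1 < s"
  shows "integrable lborel (\<lambda>x. indicator {1<..} x * (pi * x) powr (-s))"
    "(\<integral>x. indicator {1<..} x * (pi * x) powr (-s) \<partial>lborel) = 1 / (pi powr s * (s - 1))"
proof -
  define F where "F = (\<lambda>x::real. - (x powr (1 - s)) / (pi powr s * (s - 1)))"
  have der: "DERIV F x :> (pi * x) powr (-s)" if "0 < x" for x
  proof -
    have "DERIV F x :> - ((1 - s) * x powr (1 - s - 1)) / (pi powr s * (s - 1))"
      unfolding F_def using that s by (auto intro!: derivative_eq_intros)
    moreover have "- ((1 - s) * x powr (1 - s - 1)) / (pi powr s * (s - 1)) = (pi * x) powr (-s)"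
      using s that by (simp add: powr_mult powr_minus field_simps)
    ultimately show ?thesis by simp
  qed
  have A: "((F \<circ> real_of_ereal) \<longlongrightarrow> F 1) (at_right (ereal 1))"
    unfolding ereal_tendsto_simps
    by (rule tendsto_within_subset[OF _ subset_UNIV]) (rule isCont_tendsto_compose[OF DERIV_isCont[OF der] tendsto_ident_at], simp)
  have B: "((F \<circ> real_of_ereal) \<longlongrightarrow> 0) (at_left \<infinity>)"
  proof -
    have "((\<lambda>x::real. x powr (1-s)) \<longlongrightarrow> 0) at_top"
      by (rule tendsto_neg_powr) (use s in \<open>auto simp: filterlim_ident\<close>)
    from tendsto_divide[OF tendsto_minus[OF this] tendsto_const[of "pi powr s * (s - 1)"]]
    show ?thesis unfolding ereal_tendsto_simps F_def using s by simp
  qed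
  note ftc = interval_integral_FTC_nonneg[where a="ereal 1" and b=\<infinity> and F=F and f="\<lambda>x. (pi * x) powr (-s)", OF _ _ _ _ A B]
  have c1: "set_integrable lborel (einterval (ereal 1) \<infinity>) (\<lambda>x. (pi * x) powr (-s))"
    and c2: "(LBINT x=ereal 1..\<infinity>. (pi * x) powr (-s)) = 0 - F 1"
    by (rule ftc; auto intro!: der continuous_intros)+
  show "integrable lborel (\<lambda>x. indicator {1<..} x * (pi * x) powr (-s))"
    using c1 by (simp add: set_integrable_def)
  show "(\<integral>x. indicator {1<..} x * (pi * x) powr (-s) \<partial>lborel) = 1 / (pi powr s * (s - 1))"
    using c2 by (simp add: interval_lebesgue_integral_def set_lebesgue_integral_def F_def)
qed

lemma tailL:
  fixes s :: real assumes s: "1 < s"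
  shows "integrable lborel (\<lambda>x. indicator {..<-1} x * (pi * (-x)) powr (-s))"
    "(\<integral>x. indicator {..<-1} x * (pi * (-x)) powr (-s) \<partial>lborel) = 1 / (pi powr s * (s - 1))"
proof -
  define F where "F = (\<lambda>x::real. ((-x) powr (1 - s)) / (pi powr s * (s - 1)))"
  have der: "DERIV F x :> (pi * (-x)) powr (-s)" if "x < 0" for x
  proof -
    have "DERIV F x :> ((1 - s) * (-x) powr (1 - s - 1) * (-1)) / (pi powr s * (s - 1))"
      unfolding F_def using that s by (auto intro!: derivative_eq_intros)
    moreover have "((1 - s) * (-x) powr (1 - s - 1) * (-1)) / (pi powr s * (s - 1)) = pi powr (-s) * (-x) powr (-s)"
      using s that by (simp add: powr_minus field_simps)
    moreover have "(pi * (-x)) powr (-s) = pi powr (-s) * (-x) powr (-s)"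
      using that by (subst powr_mult) auto
    ultimately show ?thesis by simp
  qed
  have B: "((F \<circ> real_of_ereal) \<longlongrightarrow> F (-1)) (at_left (ereal (-1)))"
    unfolding ereal_tendsto_simps
    by (rule tendsto_within_subset[OF _ subset_UNIV]) (rule isCont_tendsto_compose[OF DERIV_isCont[OF der] tendsto_ident_at], simp)
  have A: "((F \<circ> real_of_ereal) \<longlongrightarrow> 0) (at_right (-\<infinity>))"
  proof -
    have "((\<lambda>x::real. (-x) powr (1-s)) \<longlongrightarrow> 0) at_bot"
      by (rule tendsto_neg_powr) (use s in \<open>auto simp: filterlim_uminus_at_top filterlim_ident\<close>)
    from tendsto_divide[OF this tendsto_const[of "pi powr s * (s - 1)"]]
    show ?thesis unfolding ereal_tendsto_simps F_def using s by simp
  qed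
  have der': "DERIV F x :> (-(pi * x)) powr (-s)" if "x < 0" for x using der[OF that] by simp
  note ftc = interval_integral_FTC_nonneg[where a="-\<infinity>" and b="ereal (-1)" and F=F and f="\<lambda>x. (pi * (-x)) powr (-s)", OF _ _ _ _ A B]
  have c1: "set_integrable lborel (einterval (-\<infinity>) (ereal (-1))) (\<lambda>x. (pi * (-x)) powr (-s))"
    and c2: "(LBINT x=-\<infinity>..ereal (-1). (pi * (-x)) powr (-s)) = F (-1) - 0"
    by (rule ftc; auto intro!: der' continuous_intros)+
  show "integrable lborel (\<lambda>x. indicator {..<-1} x * (pi * (-x)) powr (-s))"
    using c1 by (simp add: set_integrable_def)
  show "(\<integral>x. indicator {..<-1} x * (pi * (-x)) powr (-s) \<partial>lborel) = 1 / (pi powr s * (s - 1))"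
    using c2 by (simp add: interval_lebesgue_integral_def set_lebesgue_integral_def F_def)
qed

lemma gauss:
  fixes s :: real assumes s: "0 < s"
  shows "integrable lborel (\<lambda>x. exp (- (s * pi^2 / 6) * x^2))"
    "(\<integral>x. exp (- (s * pi^2 / 6) * x^2) \<partial>lborel) = sqrt (6 / (pi * s))"
proof -
  define \<sigma> where "\<sigma> = sqrt (3 / (s * pi^2))"
  have sp: "\<sigma>^2 = 3 / (s * pi^2)" using s by (simp add: \<sigma>_def)
  have sg: "0 < \<sigma>" using s by (simp add: \<sigma>_def)
  have sp2: "\<sigma> * \<sigma> = 3 / (s * pi^2)" using sp by (simp add: power2_eq_square)
  have eq: "exp (- (s * pi^2 / 6) * x^2) = sqrt (6 / (pi * s)) * normal_density 0 \<sigma> x" for x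
  proof -
    have "2 * pi * \<sigma>^2 = 6 / (pi * s)" unfolding sp using s by (simp add: field_simps power2_eq_square)
    moreover have "-((x - 0)^2) / (2 * \<sigma>^2) = - (s * pi^2 / 6) * x^2" using s by (simp add: sp2 power2_eq_square field_simps)
    ultimately show ?thesis using s by (simp add: normal_density_def)
  qed
  show "integrable lborel (\<lambda>x. exp (- (s * pi^2 / 6) * x^2))"
    unfolding eq using integrable_normal_density[OF sg] by simp
  show "(\<integral>x. exp (- (s * pi^2 / 6) * x^2) \<partial>lborel) = sqrt (6 / (pi * s))"
    unfolding eq using integral_normal_density[OF sg] by simp
qed



lemma nsinc_eq: "nsinc x = sinc (pi * x)"
  by (simp add: nsinc_def)

lemma isCont_nsinc: "isCont nsinc x"
  unfolding nsinc_eq[abs_def] by (intro continuous_intros isCont_o2[OF _ isCont_sinc])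

lemma measurable_nsinc[measurable]: "nsinc \<in> borel_measurable borel"
  unfolding nsinc_eq[abs_def] by measurable

lemma F_deriv:
  assumes x: "x \<noteq> 0"
  shows "DERIV (\<lambda>x. Si (2*pi*x) / pi - sin (pi*x) * sinc (pi*x) / pi) x :> nsinc x ^ 2"
proof -
  have d0: "DERIV (\<lambda>x. Si (2*pi*x)) x :> sinc (2*pi*x) * (2*pi)"
    by (rule DERIV_chain2[OF DERIV_Si]) (auto intro!: derivative_eq_intros)
  have d1: "DERIV (\<lambda>x. Si (2*pi*x) / pi) x :> sinc (2*pi*x) * (2*pi) / pi"
    by (rule DERIV_cdivide[OF d0])
  have dn: "DERIV (\<lambda>x. (sin (pi*x))^2) x :> 2 * sin (pi*x) * (cos (pi*x) * pi)"
    by (auto intro!: derivative_eq_intros)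
  have dd: "DERIV (\<lambda>x. pi^2 * x) x :> pi^2"
    by (auto intro!: derivative_eq_intros)
  have d2: "DERIV (\<lambda>x. (sin (pi*x))^2 / (pi^2 * x)) x :>
      ((2 * sin (pi*x) * (cos (pi*x) * pi)) * (pi^2 * x) - pi^2 * (sin (pi*x))^2) / ((pi^2 * x) ^ Suc (Suc 0))"
    by (rule DERIV_quotient[OF dn dd]) (use x in simp)
  have eq: "sinc (2*pi*x) * (2*pi) / pi -
      ((2 * sin (pi*x) * (cos (pi*x) * pi)) * (pi^2 * x) - pi^2 * (sin (pi*x))^2) / ((pi^2 * x) ^ Suc (Suc 0))
      = nsinc x ^ 2"
  proof -
    have "sin (2*pi*x) = 2 * sin (pi*x) * cos (pi*x)" using sin_double[of "pi*x"] by (simp add: mult.assoc)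
    then show ?thesis using x by (simp add: nsinc_def field_simps power2_eq_square)
  qed
  have d3: "DERIV (\<lambda>x. Si (2*pi*x) / pi - (sin (pi*x))^2 / (pi^2 * x)) x :> nsinc x ^ 2"
    using DERIV_diff[OF d1 d2] unfolding eq .
  show ?thesis
    apply (rule has_field_derivative_transform_within_open[OF d3, where S="-{0}"])
    using x by (auto simp: power2_eq_square field_simps)
qed

definition FF :: "real \<Rightarrow> real" where
  "FF x = Si (2*pi*x) / pi - sin (pi*x) * sinc (pi*x) / pi"

lemma isCont_FF: "isCont FF x"
  unfolding FF_def[abs_def]
  by (intro continuous_intros isCont_o2[OF _ isCont_sinc] isCont_o2[OF _ isCont_Si]) auto

lemma FF_0: "FF 0 = 0"
  by (simp add: FF_def Si_def zero_ereal_def)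

lemma FF_second_bound: "x \<noteq> 0 \<Longrightarrow> norm (sin (pi*x) * sinc (pi*x) / pi) \<le> 1 / (pi^2 * \<bar>x\<bar>)"
proof -
  assume x: "x \<noteq> 0"
  have pz: "pi \<noteq> 0" by simp
  have "\<bar>sin (pi*x)\<bar> * \<bar>sin (pi*x)\<bar> \<le> 1 * 1"
    by (intro mult_mono) auto
  then show ?thesis using x pz by (simp add: abs_mult power2_eq_square field_simps)
qed

lemma FF_second_0_top: "((\<lambda>x. sin (pi*x) * sinc (pi*x) / pi) \<longlongrightarrow> 0) at_top"
proof (rule Lim_null_comparison)
  have lim: "LIM x at_top. pi^2 * x :> at_top"
    by (rule filterlim_tendsto_pos_mult_at_top[OF tendsto_const]) (auto simp: filterlim_ident)
  show "((\<lambda>x. 1 / (pi^2 * x)) \<longlongrightarrow> 0) at_top"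
    by (rule tendsto_divide_0[OF tendsto_const filterlim_at_top_imp_at_infinity[OF lim]])
  show "\<forall>\<^sub>F x in at_top. norm (sin (pi*x) * sinc (pi*x) / pi) \<le> 1 / (pi^2 * x)"
    using eventually_gt_at_top[of 0]
  proof eventually_elim
    case (elim x) then show ?case using FF_second_bound[of x] by simp
  qed
qed

lemma FF_second_0_bot: "((\<lambda>x. sin (pi*x) * sinc (pi*x) / pi) \<longlongrightarrow> 0) at_bot"
proof (rule Lim_null_comparison)
  have lim: "LIM x at_bot. pi^2 * (-x) :> at_top"
    unfolding filterlim_at_bot_mirror
    by (simp, rule filterlim_tendsto_pos_mult_at_top[OF tendsto_const]) (auto simp: filterlim_ident)
  show "((\<lambda>x. 1 / (pi^2 * (-x))) \<longlongrightarrow> 0) at_bot"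
    by (rule tendsto_divide_0[OF tendsto_const filterlim_at_top_imp_at_infinity[OF lim]])
  show "\<forall>\<^sub>F x in at_bot. norm (sin (pi*x) * sinc (pi*x) / pi) \<le> 1 / (pi^2 * (-x))"
    using eventually_le_at_bot[of "-1::real"]
  proof eventually_elim
    case (elim x) then show ?case using FF_second_bound[of x] by simp
  qed
qed

lemma FF_top: "(FF \<longlongrightarrow> 1/2) at_top"
proof -
  have lim: "LIM x at_top. 2 * pi * x :> at_top"
    by (rule filterlim_tendsto_pos_mult_at_top[OF tendsto_const]) (auto simp: filterlim_ident)
  have "((\<lambda>x. Si (2*pi*x)) \<longlongrightarrow> pi/2) at_top"
    by (rule filterlim_compose[OF Si_at_top lim])
  from tendsto_diff[OF tendsto_divide[OF this tendsto_const[of pi]] FF_second_0_top]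
  show ?thesis unfolding FF_def[abs_def] by simp
qed

lemma FF_bot: "(FF \<longlongrightarrow> -(1/2)) at_bot"
proof -
  have lim: "LIM x at_bot. -(2 * pi * x) :> at_top"
    unfolding filterlim_at_bot_mirror
    by (simp, rule filterlim_tendsto_pos_mult_at_top[OF tendsto_const]) (auto simp: filterlim_ident)
  have "((\<lambda>x. - Si (-(2*pi*x))) \<longlongrightarrow> -(pi/2)) at_bot"
    by (rule tendsto_minus[OF filterlim_compose[OF Si_at_top lim]])
  moreover have "\<forall>\<^sub>F x in at_bot. - Si (-(2*pi*x)) = Si (2*pi*x)"
    using eventually_le_at_bot[of 0]
  proof eventually_elim
    case (elim x)
    then have "0 \<le> -(2*pi*x)" by (simp add: mult_nonneg_nonpos)
    from Si_neg[OF this] show ?case by simp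
  qed
  ultimately have "((\<lambda>x. Si (2*pi*x)) \<longlongrightarrow> -(pi/2)) at_bot"
    using Lim_transform_eventually by fastforce
  from tendsto_diff[OF tendsto_divide[OF this tendsto_const[of pi]] FF_second_0_bot]
  show ?thesis unfolding FF_def[abs_def] by simp
qed

lemma sinc2_integral:
  shows "integrable lborel (\<lambda>x. nsinc x ^ 2)" "(\<integral>x. nsinc x ^ 2 \<partial>lborel) = 1"
proof -
  have der: "DERIV FF x :> nsinc x ^ 2" if "x \<noteq> 0" for x
    using F_deriv[OF that] unfolding FF_def[abs_def] .
  have ct: "isCont (\<lambda>x. nsinc x ^ 2) x" for x by (intro continuous_intros isCont_nsinc)
  have c00: "(FF \<longlongrightarrow> 0) (at 0)" using isCont_FF[of 0] FF_0 by (simp add: isCont_def)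
  have c0: "(FF \<longlongrightarrow> 0) (at x within S)" if "x = 0" for x and S :: "real set"
    using tendsto_within_subset[OF c00 subset_UNIV] that by simp
  note ftcR = interval_integral_FTC_nonneg[where a=0 and b=\<infinity> and F=FF and f="\<lambda>x. nsinc x ^ 2" and A=0 and B="1/2"]
  have R1: "set_integrable lborel (einterval 0 \<infinity>) (\<lambda>x. nsinc x ^ 2)"
    and R2: "(LBINT x=0..\<infinity>. nsinc x ^ 2) = 1/2 - 0"
    by (rule ftcR; auto simp: zero_ereal_def ereal_tendsto_simps intro!: der ct c0 FF_top)+
  note ftcL = interval_integral_FTC_nonneg[where a="-\<infinity>" and b=0 and F=FF and f="\<lambda>x. nsinc x ^ 2" and A="-(1/2)" and B=0]
  have L1: "set_integrable lborel (einterval (-\<infinity>) 0) (\<lambda>x. nsinc x ^ 2)"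
    and L2: "(LBINT x=-\<infinity>..0. nsinc x ^ 2) = 0 - (-(1/2))"
    by (rule ftcL; auto simp: zero_ereal_def ereal_tendsto_simps intro!: der ct c0 FF_bot)+
  have iR: "integrable lborel (\<lambda>x. indicator {0<..} x * nsinc x ^ 2)"
    using R1 by (simp add: set_integrable_def zero_ereal_def)
  have iL: "integrable lborel (\<lambda>x. indicator {..<0} x * nsinc x ^ 2)"
    using L1 by (simp add: set_integrable_def zero_ereal_def)
  have vR: "(\<integral>x. indicator {0<..} x * nsinc x ^ 2 \<partial>lborel) = 1/2"
    using R2 by (simp add: interval_lebesgue_integral_def set_lebesgue_integral_def zero_ereal_def)
  have vL: "(\<integral>x. indicator {..<0} x * nsinc x ^ 2 \<partial>lborel) = 1/2"
    using L2 by (simp add: interval_lebesgue_integral_def set_lebesgue_integral_def zero_ereal_def)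
  have AE: "AE x in lborel. indicator {0<..} x * nsinc x ^ 2 + indicator {..<0} x * nsinc x ^ 2 = nsinc x ^ 2"
    using AE_lborel_singleton[of "0::real"] by eventually_elim (auto simp: indicator_def)
  have i: "integrable lborel (\<lambda>x. indicator {0<..} x * nsinc x ^ 2 + indicator {..<0} x * nsinc x ^ 2)"
    using iR iL by simp
  show "integrable lborel (\<lambda>x. nsinc x ^ 2)"
    by (rule integrable_cong_AE_imp[OF i _ AE]) measurable
  have "(\<integral>x. nsinc x ^ 2 \<partial>lborel) = (\<integral>x. indicator {0<..} x * nsinc x ^ 2 + indicator {..<0} x * nsinc x ^ 2 \<partial>lborel)"
    by (rule integral_cong_AE[symmetric, OF _ _ AE]) measurable
  also have "\<dots> = 1" using iR iL vR vL by simp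
  finally show "(\<integral>x. nsinc x ^ 2 \<partial>lborel) = 1" .
qed



lemma nsinc_abs_le1: "\<bar>nsinc x\<bar> \<le> 1"
proof (cases "x = 0")
  case False
  have "\<bar>sin (pi*x)\<bar> \<le> \<bar>pi*x\<bar>" by (rule abs_sin_x_le_abs_x)
  then show ?thesis using False by (simp add: nsinc_def abs_divide divide_le_eq_1)
qed (simp add: nsinc_def)

lemma nsinc_abs_form: "x \<noteq> 0 \<Longrightarrow> nsinc x = sin (pi * \<bar>x\<bar>) / (pi * \<bar>x\<bar>)"
  by (cases "x < 0") (auto simp: nsinc_def abs_if)

lemma nsinc_gauss: assumes "\<bar>x\<bar> \<le> 1" shows "\<bar>nsinc x\<bar> \<le> exp (-(pi^2 * x^2) / 6)"
proof (cases "x = 0")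
  case True then show ?thesis by (simp add: nsinc_def)
next
  case False
  define t where "t = pi * \<bar>x\<bar>"
  have t: "0 < t" "t \<le> pi" using False assms by (auto simp: t_def)
  have "sin t \<ge> 0" using t by (intro sin_ge_zero) auto
  moreover have "nsinc x = sin t / t" using nsinc_abs_form[OF False] by (simp add: t_def)
  moreover have "sin t / t \<le> exp (-(t^2) / 6)"
    using sin_gauss[of t] t by (simp add: divide_le_eq mult.commute)
  moreover have "t^2 = pi^2 * x^2" by (simp add: t_def power_mult_distrib)
  ultimately show ?thesis using t by simp
qed

lemma nsinc_tail: assumes "x \<noteq> 0" shows "\<bar>nsinc x\<bar> \<le> 1 / (pi * \<bar>x\<bar>)"
proof -
  have "\<bar>sin (pi*x)\<bar> \<le> 1" by simp
  then show ?thesis using assms by (simp add: nsinc_def abs_divide abs_mult divide_right_mono)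
qed

definition G :: "real \<Rightarrow> real \<Rightarrow> real" where
  "G s x = exp (- (s * pi^2 / 6) * x^2) + indicator {1<..} x * (pi * x) powr (-s)
     + indicator {..<-1} x * (pi * (-x)) powr (-s)"

lemma pw_bound: assumes s: "0 < s" shows "\<bar>nsinc x\<bar> powr s \<le> G s x"
proof -
  have nn1: "0 \<le> indicator {1<..} x * (pi * x) powr (-s)" by simp
  have nn2: "0 \<le> indicator {..<-1} x * (pi * (-x)) powr (-s)" by simp
  have nn0: "0 \<le> exp (- (s * pi^2 / 6) * x^2)" by simp
  consider "\<bar>x\<bar> \<le> 1" | "x > 1" | "x < -1" by linarith
  then show ?thesis
  proof cases
    case 1
    have "\<bar>nsinc x\<bar> powr s \<le> exp (-(pi^2 * x^2) / 6) powr s"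
      by (rule powr_mono2) (use s nsinc_gauss[OF 1] in auto)
    also have "\<dots> = exp (- (s * pi^2 / 6) * x^2)"
      by (simp add: powr_def)
    finally show ?thesis using nn1 nn2 unfolding G_def by linarith
  next
    case 2
    have "\<bar>nsinc x\<bar> powr s \<le> (1 / (pi * \<bar>x\<bar>)) powr s"
      by (rule powr_mono2) (use s nsinc_tail[of x] 2 in auto)
    also have "\<dots> = (pi * x) powr (-s)"
      using 2 by (simp add: powr_minus_divide powr_divide)
    finally have c: "\<bar>nsinc x\<bar> powr s \<le> (pi * x) powr (-s)" .
    have "G s x = exp (- (s * pi^2 / 6) * x^2) + (pi * x) powr (-s)" using 2 by (simp add: G_def)
    then show ?thesis using c nn0 by linarith
  next
    case 3
    define y where "y = -x"
    have y: "1 < y" "\<bar>x\<bar> = y" "-x = y" using 3 by (auto simp: y_def)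
    have "\<bar>nsinc x\<bar> powr s \<le> (1 / (pi * y)) powr s"
      by (rule powr_mono2) (use s nsinc_tail[of x] 3 y in auto)
    also have "\<dots> = (pi * y) powr (-s)"
      using y by (simp add: powr_minus_divide powr_divide)
    finally have c: "\<bar>nsinc x\<bar> powr s \<le> (pi * (-x)) powr (-s)" unfolding y .
    have "G s x = exp (- (s * pi^2 / 6) * x^2) + (pi * (-x)) powr (-s)" using 3 by (simp add: G_def)
    then show ?thesis using c nn0 by linarith
  qed
qed

lemma G_integral: assumes s: "1 < s"
  shows "integrable lborel (G s)" "(\<integral>x. G s x \<partial>lborel) = sqrt (6 / (pi * s)) + 2 / (pi powr s * (s - 1))"
proof -
  have s0: "0 < s" using s by simp
  note g = gauss[OF s0] and r = tailR[OF s] and l = tailL[OF s]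
  show "integrable lborel (G s)" unfolding G_def[abs_def] using g r l by simp
  show "(\<integral>x. G s x \<partial>lborel) = sqrt (6 / (pi * s)) + 2 / (pi powr s * (s - 1))"
    unfolding G_def[abs_def] using g r l by simp
qed

lemma main_bound: assumes s: "1 < s"
  shows "integrable lborel (\<lambda>x. \<bar>nsinc x\<bar> powr s)"
    "(\<integral>x. \<bar>nsinc x\<bar> powr s \<partial>lborel) \<le> sqrt (6 / (pi * s)) + 2 / (pi powr s * (s - 1))"
proof -
  have s0: "0 < s" using s by simp
  show i: "integrable lborel (\<lambda>x. \<bar>nsinc x\<bar> powr s)"
    by (rule Bochner_Integration.integrable_bound[OF G_integral(1)[OF s]]) (use pw_bound[OF s0] in \<open>auto intro: order_trans[OF _ abs_ge_self]\<close>)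
  have "(\<integral>x. \<bar>nsinc x\<bar> powr s \<partial>lborel) \<le> (\<integral>x. G s x \<partial>lborel)"
    by (rule integral_mono[OF i G_integral(1)[OF s] pw_bound[OF s0]])
  then show "(\<integral>x. \<bar>nsinc x\<bar> powr s \<partial>lborel) \<le> sqrt (6 / (pi * s)) + 2 / (pi powr s * (s - 1))"
    using G_integral(2)[OF s] by simp
qed



lemma ln_lower: fixes y :: real assumes "0 \<le> y" shows "y - y^2/2 \<le> ln (1 + y)"
proof -
  have "(\<lambda>u. ln (1 + u) - u + u^2/2) 0 \<le> (\<lambda>u. ln (1 + u) - u + u^2/2) y"
  proof (rule DERIV_nonneg_imp_nondecreasing[OF assms])
    fix x :: real assume x: "0 \<le> x" "x \<le> y"
    have "DERIV (\<lambda>u. ln (1 + u) - u + u^2/2) x :> 1 / (1 + x) - 1 + x"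
      using x by (auto intro!: derivative_eq_intros simp: field_simps)
    moreover have "1 / (1 + x) - 1 + x = x^2 / (1 + x)" using x by (simp add: field_simps power2_eq_square)
    moreover have "0 \<le> x^2 / (1 + x)" using x by simp
    ultimately show "\<exists>d. DERIV (\<lambda>u. ln (1 + u) - u + u^2/2) x :> d \<and> 0 \<le> d" by auto
  qed
  then show ?thesis by simp
qed

lemma m_mono: fixes u :: real assumes "2 \<le> u" shows "ln 2 - 1 \<le> ln u - ln (u - 1) - 2 / u"
proof -
  have "(\<lambda>u. ln u - ln (u - 1) - 2 / u) 2 \<le> (\<lambda>u. ln u - ln (u - 1) - 2 / u) u"
  proof (rule DERIV_nonneg_imp_nondecreasing[OF assms])
    fix x :: real assume x: "2 \<le> x" "x \<le> u"
    have "DERIV (\<lambda>u. ln u - ln (u - 1) - 2 / u) x :> 1 / x - 1 / (x - 1) + 2 / x^2"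
      using x by (auto intro!: derivative_eq_intros simp: field_simps power2_eq_square)
    moreover have "1 / x - 1 / (x - 1) + 2 / x^2 = (x - 2) / (x^2 * (x - 1))"
      using x by (simp add: field_simps power2_eq_square)
    moreover have "0 \<le> (x - 2) / (x^2 * (x - 1))" using x by simp
    ultimately show "\<exists>d. DERIV (\<lambda>u. ln u - ln (u - 1) - 2 / u) x :> d \<and> 0 \<le> d" by auto
  qed
  then show ?thesis by simp
qed

lemma Q_bound: fixes s :: real assumes "2 \<le> s" shows "(s - 2) * (ln 2 - 1) \<le> (s - 1) * (ln s - ln (s - 1)) - ln s"
proof -
  let ?Q = "\<lambda>u. (u - 1) * (ln u - ln (u - 1)) - ln u - (u - 2) * (ln 2 - 1)"
  have "?Q 2 \<le> ?Q s"
  proof (rule DERIV_nonneg_imp_nondecreasing[OF assms])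
    fix x :: real assume x: "2 \<le> x" "x \<le> s"
    have x1: "0 < x - 1" "0 < x" using x by auto
    have d1: "DERIV ln x :> 1 / x" by (rule DERIV_ln_divide) (rule x1(2))
    have d2: "DERIV (\<lambda>u. ln (u - 1)) x :> 1 / (x - 1) * 1"
      by (rule DERIV_chain2[where g="\<lambda>u. u - 1", OF DERIV_ln_divide[OF x1(1)]]) (auto intro!: derivative_eq_intros)
    have d3: "DERIV (\<lambda>u. u - 1) x :> 1" by (auto intro!: derivative_eq_intros)
    have d4: "DERIV (\<lambda>u. (u - 2) * (ln 2 - 1)) x :> 1 * (ln 2 - 1)" by (auto intro!: derivative_eq_intros)
    have D: "DERIV ?Q x :> (1 * (ln x - ln (x - 1)) + (1 / x - 1 / (x - 1) * 1) * (x - 1)) - 1 / x - 1 * (ln 2 - 1)"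
      by (intro DERIV_diff DERIV_mult d1 d2 d3 d4)
    have e1: "(1 / x - 1 / (x - 1) * 1) * (x - 1) = (x - 1) / x - 1" using x1 by (simp add: field_simps)
    have e2: "(x - 1) / x = 1 - 1 / x" using x1 by (simp add: field_simps)
    have "(1 * (ln x - ln (x - 1)) + (1 / x - 1 / (x - 1) * 1) * (x - 1)) - 1 / x - 1 * (ln 2 - 1)
        = (ln x - ln (x - 1) - 2 / x) - (ln 2 - 1)" (is "_ = ?d") using e1 e2 by simp
    from DERIV_cong[OF D this] have D': "DERIV ?Q x :> ?d" .
    have "0 \<le> ?d" using m_mono[OF x(1)] by simp
    with D' show "\<exists>d. DERIV ?Q x :> d \<and> 0 \<le> d" by blast
  qed
  then show ?thesis by simp
qed

lemma convex_pow: fixes a s :: real assumes "0 \<le> a" "2 \<le> s" "s \<le> 3"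
  shows "a powr s \<le> (3 - s) * a^2 + (s - 2) * a^3"
proof (cases "a = 0")
  case True then show ?thesis using assms by simp
next
  case False
  hence a: "0 < a" using assms by simp
  have t0: "0 \<le> s - 2" and t1: "s - 2 \<le> 1" using assms by auto
  note c0 = convex_onD[OF convex_on_exp[OF zero_le_one] t0 t1 UNIV_I UNIV_I, of "2 * ln a" "3 * ln a"]
  have c: "exp ((1 - (s-2)) * (2 * ln a) + (s-2) * (3 * ln a))
      \<le> (1 - (s-2)) * exp (2 * ln a) + (s-2) * exp (3 * ln a)"
    using c0 by (simp only: mult_1_left real_scaleR_def)
  have e0: "(1 - (s-2)) * (2 * ln a) + (s-2) * (3 * ln a) = s * ln a" by (simp add: algebra_simps)
  have e1: "exp (2 * ln a) = a^2"
  proof -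
    have "exp (2 * ln a) = exp (ln a) * exp (ln a)" by (simp only: mult_2 exp_add)
    then show ?thesis using a by (simp add: power2_eq_square)
  qed
  have e2: "exp (3 * ln a) = a^3"
  proof -
    have "3 * ln a = ln a + ln a + ln a" by simp
    hence "exp (3 * ln a) = exp (ln a) * exp (ln a) * exp (ln a)" by (simp only: exp_add)
    then show ?thesis using a by (simp add: power3_eq_cube)
  qed
  have e3: "a powr s = exp (s * ln a)" using a by (simp add: powr_def)
  show ?thesis using c unfolding e0 e1 e2 e3 by simp
qed

lemma pi3: "31 \<le> pi^3"
proof -
  have "(3.14159::real)^3 \<le> pi^3" by (rule power_mono) (use pi_approx in auto)
  moreover have "31 \<le> (3.14159::real)^3" by (simp add: power3_eq_cube)
  ultimately show ?thesis by linarith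
qed

lemma num1: "sqrt (6 / (pi * 3)) + 2 / (pi powr 3 * (3 - 1)) \<le> 5/6"
proof -
  have a: "sqrt (6 / (pi * 3)) \<le> 7979/10000"
    by (rule real_le_lsqrt) (use pi_approx in \<open>simp_all add: field_simps\<close>)
  have "2 / (pi powr 3 * (3 - 1)) = 1 / pi^3" by simp
  also have "\<dots> \<le> 1 / 31" by (rule divide_left_mono) (use pi3 in auto)
  finally have b: "2 / (pi powr 3 * (3 - 1)) \<le> 1 / 31" .
  show ?thesis using a b by linarith
qed



theorem mainTheorem1:
  fixes s :: real
  assumes "s \<ge> 2"
  shows "integrable lborel (\<lambda>x. \<bar>nsinc x\<bar> powr s)
    \<and> (\<integral>x. \<bar>nsinc x\<bar> powr s \<partial>lborel)
        \<le> (1 / sqrt s) * sqrt ((1 + 1 / (s - 1)) powr (s - 1))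
    \<and> (1 / sqrt s) * sqrt ((1 + 1 / (s - 1)) powr (s - 1)) < sqrt (exp 1 / s)"
proof -
  have s1: "1 < s" and s0: "0 < s" using assms by auto
  define y where "y = 1 / (s - 1)"
  have y: "0 < y" "y \<le> 1" using s1 assms by (auto simp: y_def field_simps)
  have sy: "(s - 1) * y = 1" using s1 by (simp add: y_def)
  define L where "L = (s - 1) * ln (1 + y)"
  have X: "(1 + 1/(s-1)) powr (s-1) = exp L"
    using y by (simp add: powr_def L_def y_def[symmetric] mult.commute)
  have phi: "(1 / sqrt s) * sqrt ((1 + 1/(s-1)) powr (s-1)) = sqrt (exp L) / sqrt s"
    unfolding X by simp
  have phi2: "sqrt (exp L) / sqrt s = sqrt (exp (L - ln s))"
    using s0 by (simp add: exp_diff real_sqrt_divide)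
  have lny: "ln (1 + y) = ln s - ln (s - 1)"
  proof -
    have "1 + y = s / (s - 1)" using s1 by (simp add: y_def field_simps)
    then show ?thesis using s1 by (simp add: ln_div)
  qed
  have Lge: "(s - 2) * (ln 2 - 1) \<le> L - ln s" using Q_bound[OF assms] lny by (simp add: L_def)
  have Llt: "L < 1"
  proof -
    have "ln (1 + y) < y" by (rule ln_add_one_self_less_self[OF y(1)])
    hence "(s - 1) * ln (1 + y) < (s - 1) * y" using s1 by simp
    then show ?thesis using sy by (simp add: L_def)
  qed
  have part3: "sqrt (exp (L - ln s)) < sqrt (exp 1 / s)"
    using Llt s0 by (simp add: exp_diff divide_strict_right_mono)
  note I = main_bound[OF s1]
  have part2: "(\<integral>x. \<bar>nsinc x\<bar> powr s \<partial>lborel) \<le> sqrt (exp L) / sqrt s"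
  proof (cases "s \<le> 3")
    case True
    note int3 = main_bound[of 3]
    have i3: "integrable lborel (\<lambda>x. \<bar>nsinc x\<bar> powr 3)" using int3 by simp
    have b3: "(\<integral>x. \<bar>nsinc x\<bar> powr 3 \<partial>lborel) \<le> 5/6" using int3(2) num1 by simp
    have pw: "\<bar>nsinc x\<bar> powr s \<le> (3 - s) * nsinc x ^ 2 + (s - 2) * \<bar>nsinc x\<bar> powr 3" for x
      using convex_pow[of "\<bar>nsinc x\<bar>" s] assms True by simp
    have iR: "integrable lborel (\<lambda>x. (3 - s) * nsinc x ^ 2 + (s - 2) * \<bar>nsinc x\<bar> powr 3)"
      using sinc2_integral(1) i3 by simp
    have "(\<integral>x. \<bar>nsinc x\<bar> powr s \<partial>lborel) \<le> (\<integral>x. (3 - s) * nsinc x ^ 2 + (s - 2) * \<bar>nsinc x\<bar> powr 3 \<partial>lborel)"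
      by (rule integral_mono[OF I(1) iR pw])
    also have "\<dots> = (3 - s) * 1 + (s - 2) * (\<integral>x. \<bar>nsinc x\<bar> powr 3 \<partial>lborel)"
      using sinc2_integral i3 by simp
    also have "\<dots> \<le> (3 - s) + (s - 2) * (5/6)"
    proof -
      have "(s - 2) * (\<integral>x. \<bar>nsinc x\<bar> powr 3 \<partial>lborel) \<le> (s - 2) * (5/6)"
        by (rule mult_left_mono[OF b3]) (use assms in simp)
      then show ?thesis by simp
    qed
    also have "\<dots> \<le> 1 + (s - 2) * (ln 2 - 1) / 2"
    proof -
      have h: "0 \<le> (s - 2) * (ln 2 - 2/3)"
        by (rule mult_nonneg_nonneg) (use ln2_ge_two_thirds assms in auto)
      have "1 + (s - 2) * (ln 2 - 1) / 2 - ((3 - s) + (s - 2) * (5/6)) = (s - 2) * (ln 2 - 2/3) / 2"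
        by (simp add: field_simps)
      then show ?thesis using h by linarith
    qed
    also have "\<dots> \<le> exp ((s - 2) * (ln 2 - 1) / 2)" by (rule exp_ge_add_one_self)
    also have "\<dots> = sqrt (exp ((s - 2) * (ln 2 - 1)))"
    proof -
      have "exp ((s - 2) * (ln 2 - 1)) = (exp ((s - 2) * (ln 2 - 1) / 2))^2"
        by (simp add: power2_eq_square exp_add[symmetric])
      then show ?thesis by simp
    qed
    also have "\<dots> \<le> sqrt (exp (L - ln s))" using Lge by simp
    finally show ?thesis using phi2 by simp
  next
    case False
    hence s3: "3 \<le> s" by simp
    have a: "sqrt (6 / (pi * s)) \<le> (13821/10000) / sqrt s"
    proof -
      have h1: "sqrt (6 / pi) \<le> 13821/10000"
        by (rule real_le_lsqrt) (use pi_approx in \<open>simp_all add: field_simps\<close>)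
      have eq: "sqrt (6 / (pi * s)) = sqrt (6 / pi) / sqrt s"
        by (simp add: real_sqrt_divide real_sqrt_mult)
      have h2: "sqrt (6 / pi) / sqrt s \<le> (13821/10000) / sqrt s"
        by (rule divide_right_mono[OF h1]) (use s0 in simp)
      show ?thesis unfolding eq by (rule h2)
    qed
    have P: "31 \<le> pi powr s"
    proof -
      have "pi powr 3 \<le> pi powr s" by (rule powr_mono) (use s3 pi_ge_two in auto)
      then show ?thesis using pi3 by simp
    qed
    have sq: "sqrt s \<le> (17321/20000) * (s - 1)"
    proof (rule real_le_lsqrt)
      show "0 \<le> (17321/20000) * (s - 1)" using s3 by simp
      have "0 \<le> (3 * s - 1) * (s - 3)" using s3 by simp
      then show "s \<le> ((17321/20000) * (s - 1))^2"
        using s3 by (simp add: power2_eq_square algebra_simps)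
    qed
    have b: "2 / (pi powr s * (s - 1)) \<le> (559/10000) / sqrt s"
    proof -
      have "2 * sqrt s \<le> (559/10000) * 31 * (s - 1)" using sq s3 by simp
      also have "\<dots> \<le> (559/10000) * (pi powr s) * (s - 1)"
        using P s3 by (intro mult_right_mono mult_left_mono) auto
      finally have h: "2 * sqrt s \<le> (559/10000) * (pi powr s) * (s - 1)" .
      have pos: "0 < sqrt s" "0 < pi powr s" "0 < s - 1" using s0 s3 by auto
      define A where "A = pi powr s * (s - 1)"
      have Apos: "0 < A" using pos by (simp add: A_def)
      have h': "2 * sqrt s \<le> (559/10000) * A" using h by (simp add: A_def mult.assoc)
      have "2 / A = (2 * sqrt s) / (A * sqrt s)" using pos(1) Apos by simp
      also have "\<dots> \<le> ((559/10000) * A) / (A * sqrt s)"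
        by (rule divide_right_mono[OF h']) (use pos(1) Apos in simp)
      also have "\<dots> = (559/10000) / sqrt s" using Apos by simp
      finally show ?thesis by (simp add: A_def)
    qed
    have c: "185/128 \<le> sqrt (exp L)"
    proof -
      have "y \<le> 1/2" using s3 by (simp add: y_def field_simps)
      have "(s - 1) * (y - y^2/2) \<le> L"
        unfolding L_def by (rule mult_left_mono[OF ln_lower]) (use y s1 in auto)
      moreover have "(s - 1) * (y - y^2/2) = 1 - y/2" using sy by (simp add: algebra_simps power2_eq_square)
      ultimately have L34: "3/4 \<le> L" using \<open>y \<le> 1/2\<close> by simp
      have "1 + 3/8 + (3/8)^2/2 \<le> exp (3/8::real)" by (rule exp_lower_Taylor_quadratic) simp
      hence e: "185/128 \<le> exp (3/8::real)" by (simp add: power2_eq_square)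
      have "(185/128)^2 \<le> (exp (3/8::real))^2" by (rule power_mono[OF e]) simp
      also have "\<dots> = exp (3/4)" by (simp add: power2_eq_square exp_add[symmetric])
      also have "\<dots> \<le> exp L" using L34 by simp
      finally show ?thesis by (rule real_le_rsqrt)
    qed
    have "(\<integral>x. \<bar>nsinc x\<bar> powr s \<partial>lborel) \<le> sqrt (6 / (pi * s)) + 2 / (pi powr s * (s - 1))"
      by (rule I(2))
    also have "\<dots> \<le> (13821/10000) / sqrt s + (559/10000) / sqrt s" using a b by simp
    also have "\<dots> = (14380/10000) / sqrt s" by (simp add: add_divide_distrib[symmetric])
    also have "\<dots> \<le> (185/128) / sqrt s" by (rule divide_right_mono) (use s0 in simp_all)
    also have "\<dots> \<le> sqrt (exp L) / sqrt s" by (rule divide_right_mono[OF c]) (use s0 in simp)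
    finally show ?thesis .
  qed
  show ?thesis using I(1) part2 part3 phi phi2 by simp
qed


end
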